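(* Let $\Sigma$ be a graded alphabet and $L_1,L_2$ two finite tree languages over $\Sigma$. Let $(\Sigma,Q,\nu,\delta)$ be the accessible part of the product RWTA $A_{L_1}\times A_{L_2}$ (over the semiring $(\mathbb{N},+,\times,0,1)$). Then $\mathrm{KerSeries}(L_1,L_2)=\nu(Q)=\sum_{q\in Q}\nu(q)$.
   Context: A graded alphabet is a finite set $\Sigma=\bigcup_{k\in\mathbb{N}}\Sigma_k$; $T_\Sigma$ is the set of trees $f(t_1,\ldots,t_k)$ with $f\in\Sigma_k$. A RWTA is $A=(\Sigma,Q,\nu,\delta)$ with $Q$ finite, $\nu:Q\to\mathbb{N}$, $\delta\subseteq\bigcup_k Q\times\Sigma_k\times Q^k$; $\delta(f,q_1,\ldots,q_k)=\{q\mid(q,f,q_1,\ldots,q_k)\in\delta\}$, extended to subsets by union over tuples; $\Delta(f(t_1,\ldots,t_k))=\delta(f,\Delta(t_1),\ldots,\Delta(t_k))$. The down language of a state $q$ is $L_q(A)=\{t\mid q\in\Delta(t)\}$; the accessible part of $A$ is the RWTA obtained by keeping only the states $q$ with $L_q(A)\neq\emptyset$, restricting $\nu$ and $\delta$ to them. For $A_i=(\Sigma,Q_i,\nu_i,\delta_i)$, the product $A_1\times A_2$ has states $Q_1\times Q_2$, transitions $\delta'(f,(q_{1_1},q_{2_1}),\ldots,(q_{1_k},q_{2_k}))=\delta_1(f,q_{1_1},\ldots,q_{1_k})\times\delta_2(f,q_{2_1},\ldots,q_{2_k})$, and weights $\nu'((q_1,q_2))=\nu_1(q_1)\nu_2(q_2)$.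 For $t=f(t_1,\ldots,t_k)$, $\mathrm{SubTree}(t)=\{t\}\cup\bigcup_j\mathrm{SubTree}(t_j)$; $\mathrm{SubTreeSet}(L)=\bigcup_{t\in L}\mathrm{SubTree}(t)$; $\mathrm{SubTreeSeries}_t(s)$ is the number of nodes of $t$ whose subtree equals $s$, and $\mathrm{SubTreeSeries}_L=\sum_{t\in L}\mathrm{SubTreeSeries}_t$. The sequential subtree automaton of $L$ is $A_L=(\Sigma,\mathrm{SubTreeSet}(L),\nu,\delta)$ with $\nu(t')=\mathrm{SubTreeSeries}_L(t')$ and, for $f\in\Sigma_k$, $t_{k+1}\in\delta(f,t_1,\ldots,t_k)$ iff $t_{k+1}=f(t_1,\ldots,t_k)$. The subtree series kernel is $\mathrm{KerSeries}(L_1,L_2)=\sum_{t\in T_\Sigma}\mathrm{SubTreeSeries}_{L_1}(t)\cdot\mathrm{SubTreeSeries}_{L_2}(t)$. *)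

theory Defs
  imports "HOL-Analysis.Analysis"
begin

text \<open>A graded alphabet is a finite set of pairs (f, k), meaning f belongs to Sigma_k.\<close>

datatype 'f tree = Node 'f "'f tree list"

inductive_set trees :: "('f \<times> nat) set \<Rightarrow> 'f tree set" for \<Sigma> where
  "(f, length ts) \<in> \<Sigma> \<Longrightarrow> (\<forall>t\<in>set ts. t \<in> trees \<Sigma>) \<Longrightarrow> Node f ts \<in> trees \<Sigma>"

record ('f, 'q) rwta =
  states :: "'q set"
  weight :: "'q \<Rightarrow> nat"
  trans  :: "('q \<times> 'f \<times> 'q list) set"

definition is_rwta :: "('f \<times> nat) set \<Rightarrow> ('f, 'q) rwta \<Rightarrow> bool" where
  "is_rwta \<Sigma> A \<longleftrightarrow> finite (states A) \<and>
     (\<forall>(q, f, qs) \<in> trans A. q \<in> states A \<and> set qs \<subseteq> states A \<and> (f, length qs) \<in> \<Sigma>)"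

text \<open>q \<in> Delta(t): unfolding Delta(f(t1..tk)) = delta(f, Delta(t1), ..., Delta(tk)).\<close>
inductive reach :: "('f, 'q) rwta \<Rightarrow> 'f tree \<Rightarrow> 'q \<Rightarrow> bool" for A where
  "(q, f, qs) \<in> trans A \<Longrightarrow> list_all2 (reach A) ts qs \<Longrightarrow> reach A (Node f ts) q"

definition Delta :: "('f, 'q) rwta \<Rightarrow> 'f tree \<Rightarrow> 'q set" where
  "Delta A t = {q. reach A t q}"

definition down_lang :: "('f \<times> nat) set \<Rightarrow> ('f, 'q) rwta \<Rightarrow> 'q \<Rightarrow> 'f tree set" where
  "down_lang \<Sigma> A q = {t \<in> trees \<Sigma>. q \<in> Delta A t}"

definition accessible_part :: "('f \<times> nat) set \<Rightarrow> ('f, 'q) rwta \<Rightarrow> ('f, 'q) rwta" where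
  "accessible_part \<Sigma> A =
     (let Q' = {q \<in> states A. down_lang \<Sigma> A q \<noteq> {}} in
      \<lparr> states = Q',
        weight = (\<lambda>q. if q \<in> Q' then weight A q else 0),
        trans = {(q, f, qs) \<in> trans A. q \<in> Q' \<and> set qs \<subseteq> Q'} \<rparr>)"

definition prod_rwta :: "('f, 'q1) rwta \<Rightarrow> ('f, 'q2) rwta \<Rightarrow> ('f, 'q1 \<times> 'q2) rwta" where
  "prod_rwta A1 A2 =
     \<lparr> states = states A1 \<times> states A2,
       weight = (\<lambda>(q1, q2). weight A1 q1 * weight A2 q2),
       trans = {((q1, q2), f, zip qs1 qs2) | q1 q2 f qs1 qs2.
                  (q1, f, qs1) \<in> trans A1 \<and> (q2, f, qs2) \<in> trans A2 \<and>
                  length qs1 = length qs2} \<rparr>"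

fun SubTree :: "'f tree \<Rightarrow> 'f tree set" where
  "SubTree (Node f ts) = insert (Node f ts) (\<Union>t\<in>set ts. SubTree t)"

definition SubTreeSet :: "'f tree set \<Rightarrow> 'f tree set" where
  "SubTreeSet L = (\<Union>t\<in>L. SubTree t)"

fun SubTreeSeries_t :: "'f tree \<Rightarrow> 'f tree \<Rightarrow> nat" where
  "SubTreeSeries_t (Node f ts) s =
     (if Node f ts = s then 1 else 0) + sum_list (map (\<lambda>c. SubTreeSeries_t c s) ts)"

definition SubTreeSeries :: "'f tree set \<Rightarrow> 'f tree \<Rightarrow> nat" where
  "SubTreeSeries L s = (\<Sum>t\<in>L. SubTreeSeries_t t s)"

definition subtree_automaton :: "'f tree set \<Rightarrow> ('f, 'f tree) rwta" where
  "subtree_automaton L =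
     \<lparr> states = SubTreeSet L,
       weight = SubTreeSeries L,
       trans = {(Node f ts, f, ts) | f ts. Node f ts \<in> SubTreeSet L \<and> set ts \<subseteq> SubTreeSet L} \<rparr>"

definition KerSeries :: "('f \<times> nat) set \<Rightarrow> 'f tree set \<Rightarrow> 'f tree set \<Rightarrow> nat" where
  "KerSeries \<Sigma> L1 L2 = (\<Sum>\<^sub>\<infinity>t\<in>trees \<Sigma>. SubTreeSeries L1 t * SubTreeSeries L2 t)"

end

theory Submission
  imports Defs
begin

lemma subtree_finite: "finite (SubTree t)"
  by (induction t rule: SubTree.induct) auto

lemma subtree_self: "t \<in> SubTree t"
  by (cases t) auto

lemma subtree_trans: "u \<in> SubTree t \<Longrightarrow> SubTree u \<subseteq> SubTree t"
  by (induction t arbitrary: u rule: SubTree.induct) auto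

lemma subtree_trees: "t \<in> trees \<Sigma> \<Longrightarrow> SubTree t \<subseteq> trees \<Sigma>"
proof (induction t rule: trees.induct)
  case (1 f ts) then show ?case by (auto intro: trees.intros)
qed

lemma series_nz: "SubTreeSeries_t t s \<noteq> 0 \<Longrightarrow> s \<in> SubTree t"
proof (induction t rule: SubTree.induct)
  case (1 f ts)
  show ?case
  proof (cases "Node f ts = s")
    case False
    with 1(2) have "sum_list (map (\<lambda>c. SubTreeSeries_t c s) ts) \<noteq> 0" by simp
    then obtain c where "c \<in> set ts" "SubTreeSeries_t c s \<noteq> 0"
      by (induction ts) auto
    with 1(1) show ?thesis by auto
  qed auto
qed

lemma series_L_nz: "finite L \<Longrightarrow> SubTreeSeries L s \<noteq> 0 \<Longrightarrow> s \<in> SubTreeSet L"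
  unfolding SubTreeSeries_def SubTreeSet_def
  using series_nz by (metis UN_I sum.neutral)

lemma subtreeset_children: "Node f ts \<in> SubTreeSet L \<Longrightarrow> set ts \<subseteq> SubTreeSet L"
proof -
  assume "Node f ts \<in> SubTreeSet L"
  then obtain t where t: "t \<in> L" "Node f ts \<in> SubTree t" unfolding SubTreeSet_def by auto
  have "set ts \<subseteq> SubTree (Node f ts)" using subtree_self by auto
  with subtree_trans[OF t(2)] t(1) show ?thesis unfolding SubTreeSet_def by blast
qed

lemma zip_lemma: "list_all2 (\<lambda>t q. q = (t,t)) ts (zip a b) \<Longrightarrow> length a = length b \<Longrightarrow> a = ts \<and> b = ts"
proof (induction ts arbitrary: a b)
  case Nil then show ?case by (cases a; cases b) auto
next
  case (Cons x xs) then show ?case by (cases a; cases b) auto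
qed

lemma reachP_D:
  assumes "reach (prod_rwta (subtree_automaton L1) (subtree_automaton L2)) t q"
  shows "q = (t,t) \<and> t \<in> SubTreeSet L1 \<and> t \<in> SubTreeSet L2"
  using assms
proof (induction rule: reach.induct)
  case (1 q f qs ts)
  from 1(1) obtain q1 q2 qs1 qs2 where tr: "q = (q1,q2)" "qs = zip qs1 qs2" "length qs1 = length qs2"
    "(q1, f, qs1) \<in> trans (subtree_automaton L1)" "(q2, f, qs2) \<in> trans (subtree_automaton L2)"
    unfolding prod_rwta_def by (simp only: rwta.select_convs mem_Collect_eq) blast
  from tr(4,5) have q12: "q1 = Node f qs1" "q2 = Node f qs2" "Node f qs1 \<in> SubTreeSet L1"
    "Node f qs2 \<in> SubTreeSet L2"
    unfolding subtree_automaton_def by auto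
  from 1(2) have "list_all2 (\<lambda>t q. q = (t,t)) ts qs"
    by (rule list_all2_mono) simp
  then have "qs1 = ts \<and> qs2 = ts" using zip_lemma tr(2,3) by blast
  with q12 tr show ?case by simp
qed

lemma prod_trans_I:
  "(q1,f,qs1) \<in> trans A1 \<Longrightarrow> (q2,f,qs2) \<in> trans A2 \<Longrightarrow> length qs1 = length qs2 \<Longrightarrow>
   ((q1,q2),f,zip qs1 qs2) \<in> trans (prod_rwta A1 A2)"
  unfolding prod_rwta_def by (simp only: rwta.select_convs mem_Collect_eq) blast

lemma reachP_I:
  "t \<in> SubTreeSet L1 \<Longrightarrow> t \<in> SubTreeSet L2 \<Longrightarrow>
    reach (prod_rwta (subtree_automaton L1) (subtree_automaton L2)) t (t,t)"
proof (induction t)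
  case (Node f ts)
  have c1: "set ts \<subseteq> SubTreeSet L1" by (rule subtreeset_children[OF Node.prems(1)])
  have c2: "set ts \<subseteq> SubTreeSet L2" by (rule subtreeset_children[OF Node.prems(2)])
  have t1: "(Node f ts, f, ts) \<in> trans (subtree_automaton L1)"
    unfolding subtree_automaton_def using Node.prems c1 by simp
  have t2: "(Node f ts, f, ts) \<in> trans (subtree_automaton L2)"
    unfolding subtree_automaton_def using Node.prems c2 by simp
  have tr: "((Node f ts, Node f ts), f, zip ts ts) \<in> trans (prod_rwta (subtree_automaton L1) (subtree_automaton L2))"
    by (rule prod_trans_I[OF t1 t2 refl])
  have "\<forall>c\<in>set ts. reach (prod_rwta (subtree_automaton L1) (subtree_automaton L2)) c (c,c)"
  proof
    fix c assume c: "c \<in> set ts"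
    then have "c \<in> SubTreeSet L1" "c \<in> SubTreeSet L2" using c1 c2 by auto
    then show "reach (prod_rwta (subtree_automaton L1) (subtree_automaton L2)) c (c,c)"
      using Node.IH[OF c] by simp
  qed
  then have la: "list_all2 (reach (prod_rwta (subtree_automaton L1) (subtree_automaton L2))) ts (zip ts ts)"
    by (induction ts) auto
  show ?case by (rule reach.intros[OF tr la])
qed

theorem theorem2:
  fixes \<Sigma> :: "('f \<times> nat) set" and L1 L2 :: "'f tree set"
  assumes "finite \<Sigma>"
    and "finite L1" and "L1 \<subseteq> trees \<Sigma>"
    and "finite L2" and "L2 \<subseteq> trees \<Sigma>"
  shows "KerSeries \<Sigma> L1 L2 =
     (let A = accessible_part \<Sigma> (prod_rwta (subtree_automaton L1) (subtree_automaton L2))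
      in \<Sum>q\<in>states A. weight A q)"
proof -
  define P where "P = prod_rwta (subtree_automaton L1) (subtree_automaton L2)"
  define S where "S = SubTreeSet L1 \<inter> SubTreeSet L2"
  have finS: "finite S" unfolding S_def SubTreeSet_def using assms(2) subtree_finite by auto
  have Strees: "S \<subseteq> trees \<Sigma>" unfolding S_def SubTreeSet_def using assms(3) subtree_trees by blast
  have states: "states (accessible_part \<Sigma> P) = (\<lambda>t. (t,t)) ` S"
  proof -
    have "{q \<in> states P. down_lang \<Sigma> P q \<noteq> {}} = (\<lambda>t. (t,t)) ` S"
    proof (intro set_eqI iffI)
      fix q assume "q \<in> {q \<in> states P. down_lang \<Sigma> P q \<noteq> {}}"
      then obtain t where "reach P t q" unfolding down_lang_def Delta_def by auto
      then show "q \<in> (\<lambda>t. (t,t)) ` S" using reachP_D unfolding P_def S_def by blast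
    next
      fix q assume "q \<in> (\<lambda>t. (t,t)) ` S"
      then obtain t where t: "t \<in> S" "q = (t,t)" by auto
      then have "reach P t q" using reachP_I unfolding P_def S_def by blast
      moreover have "t \<in> trees \<Sigma>" using t Strees by auto
      moreover have "q \<in> states P" using t unfolding P_def prod_rwta_def subtree_automaton_def S_def by auto
      ultimately show "q \<in> {q \<in> states P. down_lang \<Sigma> P q \<noteq> {}}"
        unfolding down_lang_def Delta_def by auto
    qed
    then show ?thesis unfolding accessible_part_def Let_def by simp
  qed
  have wt: "weight (accessible_part \<Sigma> P) (t,t) = SubTreeSeries L1 t * SubTreeSeries L2 t" if "t \<in> S" for t
  proof -
    have "(t,t) \<in> states (accessible_part \<Sigma> P)" using states that by auto
    then show ?thesis unfolding accessible_part_def Let_def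
      by (simp add: P_def prod_rwta_def subtree_automaton_def)
  qed
  have rhs: "(\<Sum>q\<in>states (accessible_part \<Sigma> P). weight (accessible_part \<Sigma> P) q)
      = (\<Sum>t\<in>S. SubTreeSeries L1 t * SubTreeSeries L2 t)"
    unfolding states by (subst sum.reindex) (auto simp: inj_on_def wt)
  have "KerSeries \<Sigma> L1 L2 = (\<Sum>\<^sub>\<infinity>t\<in>S. SubTreeSeries L1 t * SubTreeSeries L2 t)"
    unfolding KerSeries_def
  proof (rule infsum_cong_neutral)
    fix t assume "t \<in> trees \<Sigma> - S"
    then have "t \<notin> S" by auto
    then show "SubTreeSeries L1 t * SubTreeSeries L2 t = 0"
      using series_L_nz[OF assms(2)] series_L_nz[OF assms(4)] unfolding S_def by auto
  next
    fix t assume "t \<in> S - trees \<Sigma>" then show "SubTreeSeries L1 t * SubTreeSeries L2 t = 0"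
      using Strees by auto
  qed auto
  also have "\<dots> = (\<Sum>t\<in>S. SubTreeSeries L1 t * SubTreeSeries L2 t)"
    using finS by simp
  finally show ?thesis using rhs unfolding P_def Let_def by simp
qed

end
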